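(* Let $\Sigma\subset\mathbb P^4$ be a smooth rational normal cubic scroll. Then there exist lines $\ell\subset\mathbb P^4$ with $\ell\cap\Sigma=\emptyset$ such that the branch curve of the projection $\pi:\Sigma\to\mathbb P^2$ from $\ell$ is the union of an irreducible cuspidal cubic and the tangent line to it at its unique flex.
   Context: The projection from a line disjoint from $\Sigma$ is a finite degree $3$ morphism $\Sigma\to\mathbb P^2$; its branch curve is its branch divisor. *)

theory Defs
  imports "HOL-Analysis.Analysis"
begin

text \<open>Projective space P^n over the complex numbers is modelled by nonzero vectors
of complex^(n+1) up to nonzero scalars; a projective variety is represented by
its affine cone minus the origin (a set of nonzero vectors closed under nonzero scaling).\<close>

text \<open>The standard smooth rational normal cubic scroll S(1,2) in P^4:
points [s x : t x : s^2 y : s t y : t^2 y], (s:t), (x:y) in P^1.\<close>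
definition std_cubic_scroll :: "(complex^5) set" where
  "std_cubic_scroll = {v. \<exists>s t x y. (s, t) \<noteq> (0, 0) \<and> (x, y) \<noteq> (0, 0) \<and>
      v $ 0 = s * x \<and> v $ 1 = t * x \<and> v $ 2 = s^2 * y \<and> v $ 3 = s * t * y \<and> v $ 4 = t^2 * y}"

text \<open>A smooth rational normal cubic scroll in P^4: a projective transform of the standard one.\<close>
definition rational_normal_cubic_scroll :: "(complex^5) set \<Rightarrow> bool" where
  "rational_normal_cubic_scroll S \<longleftrightarrow>
     (\<exists>M :: complex^5^5. invertible M \<and> S = (\<lambda>v. M *v v) ` std_cubic_scroll)"

text \<open>A line in P^4: (the cone over it is) a 2-dimensional complex linear subspace of complex^5.\<close>
definition proj_line :: "(complex^5) set \<Rightarrow> bool" where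
  "proj_line L \<longleftrightarrow> (\<exists>u w. (\<forall>a b. a *s u + b *s w = 0 \<longrightarrow> a = 0 \<and> b = 0) \<and>
       L = {a *s u + b *s w | a b. True})"

text \<open>The projective point (class) of a nonzero vector.\<close>
definition proj_point :: "'a::field^'n \<Rightarrow> ('a^'n) set" where
  "proj_point v = {c *s v | c. c \<noteq> 0}"

text \<open>Projective points of S over the point [q] of P^2 under the linear projection A.\<close>
definition proj_fiber :: "(complex^5) set \<Rightarrow> complex^5^3 \<Rightarrow> complex^3 \<Rightarrow> (complex^5) set set" where
  "proj_fiber S A q = proj_point ` {v \<in> S. \<exists>c. A *v v = c *s q}"

text \<open>Branch locus (cone over it) of the finite degree 3 morphism S \<rightarrow> P^2:
points of P^2 over which the fiber has fewer than 3 distinct points.\<close>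
definition branch_locus :: "(complex^5) set \<Rightarrow> complex^5^3 \<Rightarrow> (complex^3) set" where
  "branch_locus S A = {q. q \<noteq> 0 \<and> card (proj_fiber S A q) < 3}"

text \<open>Normal form: the irreducible cuspidal cubic y^2 z = x^3 together with its tangent
line z = 0 at its unique flex [0:1:0].\<close>
definition cusp_cubic_and_flex_tangent :: "(complex^3) set" where
  "cusp_cubic_and_flex_tangent =
     {w. w \<noteq> 0 \<and> ((w $ 1)^2 * (w $ 2) - (w $ 0)^3) * (w $ 2) = 0}"

end

theory Submission imports Defs "HOL-Computational_Algebra.Fundamental_Theorem_Algebra" begin

lemma exhaust_5':
  fixes x :: 5
  shows "x = 0 \<or> x = 1 \<or> x = 2 \<or> x = 3 \<or> x = 4"
proof (induct x)
  case (of_int z)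
  then have "z = 0 \<or> z = 1 \<or> z = 2 \<or> z = 3 \<or> z = 4" by fastforce
  then show ?case by auto
qed

lemma UNIV_5': "(UNIV::5 set) = {0,1,2,3,4}"
  using exhaust_5' by auto

lemma sum_5': "sum f (UNIV::5 set) = f 0 + f 1 + f 2 + f 3 + f 4"
  unfolding UNIV_5' by (simp add: ac_simps)

lemma exhaust_3':
  fixes x :: 3
  shows "x = 0 \<or> x = 1 \<or> x = 2"
proof (induct x)
  case (of_int z)
  then have "z = 0 \<or> z = 1 \<or> z = 2" by fastforce
  then show ?case by auto
qed

lemma UNIV_3': "(UNIV::3 set) = {0,1,2}"
  using exhaust_3' by auto

lemma sum_3': "sum f (UNIV::3 set) = f 0 + f 1 + f 2"
  unfolding UNIV_3' by (simp add: ac_simps)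

definition Ast :: "complex^5^3" where
  "Ast = (\<chi> i j. if i = 0 \<and> j = 4 then -1 else if i = 1 \<and> (j = 1 \<or> j = 2) then 1
     else if i = 2 \<and> j = 0 then -1 else 0)"

lemma Ast_mult: "Ast *v v = (\<chi> i. if i = 0 then - (v$4) else if i = 1 then v$1 + v$2 else - (v$0))"
  using exhaust_3'
  by (auto simp: vec_eq_iff matrix_vector_mult_def Ast_def sum_5')

lemma cubic_roots:
  fixes p r :: complex
  shows "\<exists>a b. (\<forall>z. z^3 + p*z + r = (z-a)*(z-b)*(z-(-a-b))) \<and>
     4*p^3 + 27*r^2 = - (((a-b)*(a-(-a-b))*(b-(-a-b)))^2)"
proof -
  have "\<exists>z. poly [:r, p, 0, 1:] z = (0::complex)"
    by (rule fundamental_theorem_of_algebra_alt) auto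
  then obtain a where ha: "a^3 + p*a + r = 0"
    by (auto simp: algebra_simps power3_eq_cube)
  define d where "d = csqrt (-3*a^2 - 4*p)"
  have d2: "d^2 = -3*a^2 - 4*p" unfolding d_def by simp
  define b where "b = (d - a)/2"
  have pe: "p = -(a^2) - a*b - b^2"
    using d2 unfolding b_def apply (simp add: field_simps power2_eq_square) by algebra
  have re: "r = a^2*b + a*b^2"
    using ha pe by (simp add: algebra_simps power2_eq_square power3_eq_cube)
  show ?thesis
    apply (rule exI[of _ a], rule exI[of _ b])
    unfolding pe re by algebra
qed

lemma proj_point_scale: "c \<noteq> 0 \<Longrightarrow> proj_point (c *s w) = proj_point (w::'a::field^'n)"
  unfolding proj_point_def
proof safe
  fix d :: 'a assume "c \<noteq> 0" "d \<noteq> 0"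
  then show "\<exists>e. d *s (c *s w) = e *s w \<and> e \<noteq> 0" by (intro exI[of _ "d*c"]) auto
next
  fix d :: 'a assume "c \<noteq> 0" "d \<noteq> 0"
  then show "\<exists>e. d *s w = e *s (c *s w) \<and> e \<noteq> 0" by (intro exI[of _ "d/c"]) auto
qed

lemma proj_point_eqD: "proj_point u = proj_point w \<Longrightarrow> \<exists>k. u = k *s w"
proof -
  assume "proj_point u = proj_point w"
  moreover have "u \<in> proj_point u" unfolding proj_point_def by (intro CollectI exI[of _ 1]) auto
  ultimately show ?thesis unfolding proj_point_def by auto
qed

lemma std_Ast_nz:
  assumes "v \<in> std_cubic_scroll" shows "Ast *v v \<noteq> 0"
proof
  assume h: "Ast *v v = 0"
  from assms obtain s t x y where st: "(s, t) \<noteq> (0, 0)" "(x, y) \<noteq> (0, 0)" and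
    v: "v $ 0 = s * x" "v $ 1 = t * x" "v $ 2 = s^2 * y" "v $ 3 = s * t * y" "v $ 4 = t^2 * y"
    unfolding std_cubic_scroll_def by blast
  from h have e: "t^2*y = 0" "t*x + s^2*y = 0" "s*x = 0"
    unfolding Ast_mult vec_eq_iff using v
    by (auto dest: spec[of _ 0] spec[of _ 1] spec[of _ 2])
  show False
  proof (cases "s = 0")
    case True
    then show ?thesis using st e by auto
  next
    case False
    then show ?thesis using st e by auto
  qed
qed


definition gpt :: "complex^3 \<Rightarrow> complex \<Rightarrow> complex^5" where
 "gpt q z = (\<chi> i. if i = 0 then z*(q$1 + z^2*q$0) else if i = 1 then q$1 + z^2*q$0
    else if i = 2 then z^2*(-(q$0)) else if i = 3 then z*(-(q$0)) else -(q$0))"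

lemma gpt_comp: "gpt q z $ 0 = z*(q$1 + z^2*q$0)" "gpt q z $ 1 = q$1 + z^2*q$0"
  "gpt q z $ 2 = z^2*(-(q$0))" "gpt q z $ 3 = z*(-(q$0))" "gpt q z $ 4 = -(q$0)"
  by (simp_all add: gpt_def)

lemma vec5_eqI:
  fixes u w :: "'a^5"
  assumes "u$0 = w$0" "u$1 = w$1" "u$2 = w$2" "u$3 = w$3" "u$4 = w$4"
  shows "u = w"
  unfolding vec_eq_iff
proof
  fix i
  show "u$i = w$i" using exhaust_5'[of i] assms by auto
qed

lemma vec3_eqI:
  fixes u w :: "'a^3"
  assumes "u$0 = w$0" "u$1 = w$1" "u$2 = w$2"
  shows "u = w"
  unfolding vec_eq_iff
proof
  fix i
  show "u$i = w$i" using exhaust_3'[of i] assms by auto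
qed

lemma fiber_q0nz:
  assumes q0: "q$0 \<noteq> 0"
  shows "proj_fiber std_cubic_scroll Ast q = proj_point ` gpt q ` {z. q$0*z^3 + q$1*z + q$2 = 0}"
  unfolding proj_fiber_def
proof (rule set_eqI, rule iffI)
  fix P assume "P \<in> proj_point ` {v \<in> std_cubic_scroll. \<exists>c. Ast *v v = c *s q}"
  then obtain v c where vS: "v \<in> std_cubic_scroll" and vc: "Ast *v v = c *s q" and P: "P = proj_point v"
    by blast
  from vS obtain s t x y where st: "(s, t) \<noteq> (0, 0)" "(x, y) \<noteq> (0, 0)" and
    v: "v $ 0 = s * x" "v $ 1 = t * x" "v $ 2 = s^2 * y" "v $ 3 = s * t * y" "v $ 4 = t^2 * y"
    unfolding std_cubic_scroll_def by blast
  have e: "-(t^2*y) = c*q$0" "t*x + s^2*y = c*q$1" "-(s*x) = c*q$2"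
    using vc unfolding Ast_mult vec_eq_iff using v
    by (auto dest: spec[of _ 0] spec[of _ 1] spec[of _ 2])
  have c: "c \<noteq> 0" using std_Ast_nz[OF vS] vc by auto
  have t: "t \<noteq> 0" using e(1) c q0 by auto
  define z where "z = s/t"
  have zt: "z*t = s" using t unfolding z_def by simp
  have X: "c*(q$1 + z^2*q$0) = t*x"
    using e zt by algebra
  have "c*(q$0*z^3 + q$1*z + q$2) = 0"
    using e zt by algebra
  then have root: "q$0*z^3 + q$1*z + q$2 = 0" using c by simp
  have "v = c *s gpt q z"
  proof (rule vec5_eqI)
    show "v$0 = (c *s gpt q z)$0" apply (simp add: gpt_comp v) using X e zt by algebra
    show "v$1 = (c *s gpt q z)$1" apply (simp add: gpt_comp v) using X e zt by algebra
    show "v$2 = (c *s gpt q z)$2" apply (simp add: gpt_comp v) using X e zt by algebra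
    show "v$3 = (c *s gpt q z)$3" apply (simp add: gpt_comp v) using X e zt by algebra
    show "v$4 = (c *s gpt q z)$4" apply (simp add: gpt_comp v) using X e zt by algebra
  qed
  then have "P = proj_point (gpt q z)" using P proj_point_scale[OF c] by simp
  then show "P \<in> proj_point ` gpt q ` {z. q$0*z^3 + q$1*z + q$2 = 0}" using root by blast
next
  fix P assume "P \<in> proj_point ` gpt q ` {z. q$0*z^3 + q$1*z + q$2 = 0}"
  then obtain z where root: "q$0*z^3 + q$1*z + q$2 = 0" and P: "P = proj_point (gpt q z)" by blast
  have "gpt q z \<in> std_cubic_scroll"
    unfolding std_cubic_scroll_def using q0
    by (intro CollectI exI[of _ z] exI[of _ 1] exI[of _ "q$1 + z^2*q$0"] exI[of _ "-(q$0)"])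
       (simp add: gpt_comp)
  moreover have "Ast *v gpt q z = 1 *s q"
    using root by (intro vec3_eqI) (simp_all add: Ast_mult gpt_comp, algebra+)
  ultimately show "P \<in> proj_point ` {v \<in> std_cubic_scroll. \<exists>c. Ast *v v = c *s q}"
    using P by blast
qed


definition P1 :: "complex^3 \<Rightarrow> complex^5" where
  "P1 q = (\<chi> i. if i = 0 then -(q$2) else if i = 2 then q$1 else 0)"
definition P2 :: "complex^3 \<Rightarrow> complex^5" where
  "P2 q = (\<chi> i. if i = 0 then -(q$2) else if i = 1 then q$1 else 0)"

lemma fiber_q0z:
  assumes q0: "q$0 = 0"
  shows "proj_fiber std_cubic_scroll Ast q \<subseteq>
    {proj_point (P1 q),
     proj_point (P2 q)}"
  unfolding proj_fiber_def
proof
  fix P assume "P \<in> proj_point ` {v \<in> std_cubic_scroll. \<exists>c. Ast *v v = c *s q}"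
  then obtain v c where vS: "v \<in> std_cubic_scroll" and vc: "Ast *v v = c *s q" and P: "P = proj_point v"
    by blast
  from vS obtain s t x y where st: "(s, t) \<noteq> (0, 0)" "(x, y) \<noteq> (0, 0)" and
    v: "v $ 0 = s * x" "v $ 1 = t * x" "v $ 2 = s^2 * y" "v $ 3 = s * t * y" "v $ 4 = t^2 * y"
    unfolding std_cubic_scroll_def by blast
  have e: "-(t^2*y) = c*q$0" "t*x + s^2*y = c*q$1" "-(s*x) = c*q$2"
    using vc unfolding Ast_mult vec_eq_iff using v
    by (auto dest: spec[of _ 0] spec[of _ 1] spec[of _ 2])
  have c: "c \<noteq> 0" using std_Ast_nz[OF vS] vc by auto
  have e3: "s*x = -(c*q$2)" by (metis e(3) minus_minus)
  have "t = 0 \<or> y = 0" using e(1) q0 by simp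
  then show "P \<in> {proj_point (P1 q),
     proj_point (P2 q)}"
  proof
    assume t: "t = 0"
    have "v = c *s P1 q"
      by (rule vec5_eqI) (use e e3 v t in \<open>auto simp: P1_def\<close>)
    then show ?thesis using P proj_point_scale[OF c, of "P1 q"] by simp
  next
    assume y: "y = 0"
    have "v = c *s P2 q"
      by (rule vec5_eqI) (use e e3 v y in \<open>auto simp: P2_def\<close>)
    then show ?thesis using P proj_point_scale[OF c, of "P2 q"] by simp
  qed
qed

lemma card_fiber:
  assumes "q \<noteq> 0"
  shows "card (proj_fiber std_cubic_scroll Ast q) < 3 \<longleftrightarrow> q$0 * (4*(q$1)^3 + 27*q$0*(q$2)^2) = 0"
proof (cases "q$0 = 0")
  case True
  have "card (proj_fiber std_cubic_scroll Ast q) \<le> card {proj_point (P1 q),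
     proj_point (P2 q)}"
    by (rule card_mono[OF _ fiber_q0z[OF True]]) simp
  also have "\<dots> \<le> 2" by (simp add: card_insert_if)
  finally show ?thesis using True by simp
next
  case False
  define p where "p = q$1/q$0"
  define r where "r = q$2/q$0"
  obtain a b where fac: "\<forall>z. z^3 + p*z + r = (z-a)*(z-b)*(z-(-a-b))"
    and disc: "4*p^3 + 27*r^2 = - (((a-b)*(a-(-a-b))*(b-(-a-b)))^2)"
    using cubic_roots by blast
  have R: "{z. q$0*z^3 + q$1*z + q$2 = 0} = {a, b, -a-b}"
  proof -
    have "q$0*z^3 + q$1*z + q$2 = q$0 * (z^3 + p*z + r)" for z
      using False unfolding p_def r_def by (simp add: field_simps)
    then show ?thesis using fac False by auto
  qed
  have inj: "inj_on (proj_point \<circ> gpt q) UNIV"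
  proof (rule inj_onI)
    fix z z' assume "(proj_point \<circ> gpt q) z = (proj_point \<circ> gpt q) z'"
    then obtain k where k: "gpt q z = k *s gpt q z'" using proj_point_eqD by (metis comp_apply)
    have "-(q$0) = k * -(q$0)" using arg_cong[OF k, of "\<lambda>u. u$4"] by (simp add: gpt_comp)
    then have "k = 1" using False by simp
    then show "z = z'" using arg_cong[OF k, of "\<lambda>u. u$3"] False by (simp add: gpt_comp)
  qed
  have "card (proj_fiber std_cubic_scroll Ast q) = card {a, b, -a-b}"
    unfolding fiber_q0nz[OF False] R image_comp
    by (rule card_image, rule inj_on_subset[OF inj]) simp
  also have "\<dots> < 3 \<longleftrightarrow> a = b \<or> a = -a-b \<or> b = -a-b"
    by (auto simp: card_insert_if)
  also have "\<dots> \<longleftrightarrow> (a-b)*(a-(-a-b))*(b-(-a-b)) = 0"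
    by (simp only: mult_eq_0_iff right_minus_eq) blast
  also have "\<dots> \<longleftrightarrow> 4*p^3 + 27*r^2 = 0" using disc by simp
  also have "\<dots> \<longleftrightarrow> q$0 * (4*(q$1)^3 + 27*q$0*(q$2)^2) = 0"
  proof -
    have "(q$0)^3 * (4*p^3 + 27*r^2) = 4*(q$1)^3 + 27*q$0*(q$2)^2"
      using False unfolding p_def r_def by (simp add: field_simps power3_eq_cube power2_eq_square)
    then show ?thesis using False by (metis mult_eq_0_iff zero_eq_power2 power_not_zero)
  qed
  finally show ?thesis .
qed


definition k1 :: "complex^5" where "k1 = (\<chi> i. if i = 3 then 1 else 0)"
definition k2 :: "complex^5" where "k2 = (\<chi> i. if i = 1 then 1 else if i = 2 then -1 else 0)"

lemma Ast_ker: "{v. Ast *v v = 0} = {a *s k1 + b *s k2 | a b. True}"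
proof (rule set_eqI, rule iffI)
  fix v assume "v \<in> {v. Ast *v v = 0}"
  then have h: "v$4 = 0" "v$1 + v$2 = 0" "v$0 = 0"
    unfolding Ast_mult vec_eq_iff by (auto dest: spec[of _ 0] spec[of _ 1] spec[of _ 2])
  have "v = v$3 *s k1 + v$1 *s k2"
    by (rule vec5_eqI) (use h in \<open>auto simp: k1_def k2_def eq_neg_iff_add_eq_0 add.commute\<close>)
  then show "v \<in> {a *s k1 + b *s k2 | a b. True}" by blast
next
  fix v assume "v \<in> {a *s k1 + b *s k2 | a b. True}"
  then obtain a b where "v = a *s k1 + b *s k2" by blast
  then show "v \<in> {v. Ast *v v = 0}"
    by (intro CollectI vec3_eqI) (simp_all add: Ast_mult k1_def k2_def)
qed

definition Nm :: "complex^3^3" where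
  "Nm = (\<chi> i j. if i = 0 \<and> j = 1 then -1 else if i = 1 \<and> j = 2 then 3
     else if i = 2 \<and> j = 0 then 3/4 else 0)"
definition Nmi :: "complex^3^3" where
  "Nmi = (\<chi> i j. if i = 0 \<and> j = 2 then 4/3 else if i = 1 \<and> j = 0 then -1
     else if i = 2 \<and> j = 1 then 1/3 else 0)"

lemma Nm_mult: "(Nm *v q)$0 = -(q$1)" "(Nm *v q)$1 = 3*q$2" "(Nm *v q)$2 = 3/4*q$0"
  by (simp_all add: Nm_def matrix_vector_mult_def sum_3')

lemma Nm_inv: "invertible Nm"
  unfolding invertible_def
proof (intro exI[of _ Nmi] conjI)
  show "Nm ** Nmi = mat 1"
    unfolding vec_eq_iff matrix_matrix_mult_def mat_def
    using exhaust_3' by (auto simp: Nm_def Nmi_def sum_3')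
  show "Nmi ** Nm = mat 1"
    unfolding vec_eq_iff matrix_matrix_mult_def mat_def
    using exhaust_3' by (auto simp: Nm_def Nmi_def sum_3')
qed

lemma branch_std: "branch_locus std_cubic_scroll Ast = {q. Nm *v q \<in> cusp_cubic_and_flex_tangent}"
proof (rule set_eqI)
  fix q :: "complex^3"
  have nz: "Nm *v q \<noteq> 0 \<longleftrightarrow> q \<noteq> 0"
  proof
    assume "Nm *v q \<noteq> 0" then show "q \<noteq> 0" by auto
  next
    assume "q \<noteq> 0"
    show "Nm *v q \<noteq> 0"
    proof
      assume h: "Nm *v q = 0"
      then have "q$0 = 0" "q$1 = 0" "q$2 = 0" using Nm_mult[of q] by (auto simp: h)
      then have "q = 0" by (intro vec3_eqI) auto
      then show False using \<open>q \<noteq> 0\<close> by simp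
    qed
  qed
  have pol: "(((Nm *v q) $ 1)^2 * ((Nm *v q) $ 2) - ((Nm *v q) $ 0)^3) * ((Nm *v q) $ 2)
      = 3/16 * (q$0 * (4*(q$1)^3 + 27*q$0*(q$2)^2))"
    by (simp add: Nm_mult field_simps power2_eq_square power3_eq_cube)
  show "q \<in> branch_locus std_cubic_scroll Ast \<longleftrightarrow> q \<in> {q. Nm *v q \<in> cusp_cubic_and_flex_tangent}"
    unfolding branch_locus_def cusp_cubic_and_flex_tangent_def mem_Collect_eq nz pol
    using card_fiber by auto
qed


lemma proj_point_mult: "proj_point (M *v w) = (\<lambda>v. M *v v) ` proj_point w"
  unfolding proj_point_def
proof (rule set_eqI, rule iffI)
  fix u assume "u \<in> {c *s (M *v w) |c. c \<noteq> 0}"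
  then obtain c where c: "c \<noteq> 0" "u = c *s (M *v w)" by blast
  then have "u = M *v (c *s w)" by (simp add: vector_scalar_commute)
  then show "u \<in> (\<lambda>v. M *v v) ` {c *s w |c. c \<noteq> 0}" using c(1) by blast
next
  fix u assume "u \<in> (\<lambda>v. M *v v) ` {c *s w |c. c \<noteq> 0}"
  then obtain c where c: "c \<noteq> 0" "u = M *v (c *s w)" by blast
  then have "u = c *s (M *v w)" by (simp add: vector_scalar_commute)
  then show "u \<in> {c *s (M *v w) |c. c \<noteq> 0}" using c(1) by blast
qed

theorem proposition5p2:
  fixes S :: "(complex^5) set"
  assumes "rational_normal_cubic_scroll S"
  shows "\<exists>L. proj_line L \<and> L \<inter> S = {} \<and>
           (\<exists>A :: complex^5^3. {v. A *v v = 0} = L \<and>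
              (\<exists>N :: complex^3^3. invertible N \<and>
                 branch_locus S A = {q. N *v q \<in> cusp_cubic_and_flex_tangent}))"
proof -
  have "\<exists>M :: complex^5^5. invertible M \<and> S = (\<lambda>v. M *v v) ` std_cubic_scroll"
    using assms unfolding rational_normal_cubic_scroll_def .
  then obtain M :: "complex^5^5" where MS: "invertible M \<and> S = (\<lambda>v. M *v v) ` std_cubic_scroll"
    by (rule exE)
  have Minv: "invertible M" and S: "S = (\<lambda>v. M *v v) ` std_cubic_scroll"
    using MS by simp_all
  have "\<exists>Mi. M ** Mi = mat 1 \<and> Mi ** M = mat 1"
    using Minv unfolding invertible_def .
  then obtain Mi where MMi': "M ** Mi = mat 1 \<and> Mi ** M = mat 1" by (rule exE)
  have MMi: "M ** Mi = mat 1" and MiM: "Mi ** M = mat 1" using MMi' by simp_all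
  define A where "A = Ast ** Mi"
  define L where "L = {a *s (M *v k1) + b *s (M *v k2) | a b. True}"
  have hM: "M *v (Mi *v v) = v" for v
    by (simp add: matrix_vector_mul_assoc MMi)
  have hMi: "Mi *v (M *v v) = v" for v
    by (simp add: matrix_vector_mul_assoc MiM)
  have hA: "A *v (M *v w) = Ast *v w" for w
    by (simp only: A_def matrix_vector_mul_assoc[symmetric] hMi)
  have lin: "a *s (M *v k1) + b *s (M *v k2) = M *v (a *s k1 + b *s k2)" for a b
    by (simp add: matrix_vector_right_distrib vector_scalar_commute)
  have ker: "{v. A *v v = 0} = L"
  proof (rule set_eqI, rule iffI)
    fix v assume "v \<in> {v. A *v v = 0}"
    then have "Ast *v (Mi *v v) = 0" using hA[of "Mi *v v"] hM[of v] by simp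
    then have "Mi *v v \<in> {a *s k1 + b *s k2 | a b. True}" unfolding Ast_ker[symmetric] by simp
    then obtain a b where "Mi *v v = a *s k1 + b *s k2" by blast
    then have "v = M *v (a *s k1 + b *s k2)" using hM[of v] by metis
    then have "v = a *s (M *v k1) + b *s (M *v k2)" using lin by simp
    then show "v \<in> L" unfolding L_def by blast
  next
    fix v assume "v \<in> L"
    then obtain a b where "v = M *v (a *s k1 + b *s k2)" unfolding L_def using lin by blast
    moreover have "a *s k1 + b *s k2 \<in> {v. Ast *v v = 0}" unfolding Ast_ker by blast
    ultimately show "v \<in> {v. A *v v = 0}" using hA by simp
  qed
  have indep: "\<forall>a b. a *s (M *v k1) + b *s (M *v k2) = 0 \<longrightarrow> a = 0 \<and> b = 0"
  proof (intro allI impI)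
    fix a b assume "a *s (M *v k1) + b *s (M *v k2) = 0"
    then have "M *v (a *s k1 + b *s k2) = 0" using lin by simp
    then have h: "a *s k1 + b *s k2 = 0" using hMi[of "a *s k1 + b *s k2"] by simp
    have "a = 0" using arg_cong[OF h, of "\<lambda>u. u$3"] by (simp add: k1_def k2_def)
    moreover have "b = 0" using arg_cong[OF h, of "\<lambda>u. u$1"] by (simp add: k1_def k2_def)
    ultimately show "a = 0 \<and> b = 0" by simp
  qed
  have line: "proj_line L"
    unfolding proj_line_def L_def using indep by blast
  have disj: "L \<inter> S = {}"
  proof (rule ccontr)
    assume "L \<inter> S \<noteq> {}"
    then obtain w where w: "w \<in> std_cubic_scroll" "M *v w \<in> L" using S by blast
    then have "A *v (M *v w) = 0" using ker by blast
    then show False using hA std_Ast_nz[OF w(1)] by simp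
  qed
  have injM: "inj (\<lambda>v. M *v v)" by (rule injI) (metis hMi)
  have fib: "proj_fiber S A q = (\<lambda>X. (\<lambda>v. M *v v) ` X) ` proj_fiber std_cubic_scroll Ast q" for q
  proof -
    have F: "{v \<in> S. \<exists>c. A *v v = c *s q} = (\<lambda>v. M *v v) ` {v \<in> std_cubic_scroll. \<exists>c. Ast *v v = c *s q}"
    proof (rule set_eqI, rule iffI)
      fix v assume "v \<in> {v \<in> S. \<exists>c. A *v v = c *s q}"
      then obtain w c where w: "w \<in> std_cubic_scroll" "v = M *v w" "A *v v = c *s q" unfolding S by blast
      then have "Ast *v w = c *s q" using hA by simp
      then show "v \<in> (\<lambda>v. M *v v) ` {v \<in> std_cubic_scroll. \<exists>c. Ast *v v = c *s q}"
        using w by blast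
    next
      fix v assume "v \<in> (\<lambda>v. M *v v) ` {v \<in> std_cubic_scroll. \<exists>c. Ast *v v = c *s q}"
      then obtain w c where w: "w \<in> std_cubic_scroll" "v = M *v w" "Ast *v w = c *s q" by blast
      then have "A *v v = c *s q" using hA by simp
      then show "v \<in> {v \<in> S. \<exists>c. A *v v = c *s q}" unfolding S using w by blast
    qed
    show ?thesis unfolding proj_fiber_def F image_image proj_point_mult ..
  qed
  have "card (proj_fiber S A q) = card (proj_fiber std_cubic_scroll Ast q)" for q
    unfolding fib by (rule card_image) (simp add: inj_on_def inj_image_eq_iff[OF injM])
  then have "branch_locus S A = branch_locus std_cubic_scroll Ast"
    unfolding branch_locus_def by simp
  then have "branch_locus S A = {q. Nm *v q \<in> cusp_cubic_and_flex_tangent}"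
    using branch_std by simp
  then show ?thesis using line disj ker Nm_inv by blast
qed

end
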